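(* For every integer $n \geq 1$, we have $\gamma_{\mathrm{aff}}(B_n) = n+1$, where $B_n$ is the closed unit ball of the Euclidean space $\mathbf{R}^n$.
   Context: For a convex body $K \subset \mathbf{R}^n$, an affine map $\Phi : \mathbf{R}^n \to \mathbf{R}^n$ is $K$-positive if $\Phi(K) \subset K$, strictly $K$-positive if $\Phi(K) \subset \mathrm{int}(K)$, and $K$-primitive if it is $K$-positive and there is an integer $k \geq 1$ with $\Phi^k$ strictly $K$-positive; the smallest such $k$ is $\gamma_{\mathrm{aff}}(K,\Phi)$. The affine maximal exponent $\gamma_{\mathrm{aff}}(K)$ is the supremum of $\gamma_{\mathrm{aff}}(K,\Phi)$ over all $K$-primitive affine maps $\Phi : \mathbf{R}^n \to \mathbf{R}^n$. *)

theory Defs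
  imports "HOL-Analysis.Analysis" "HOL-Library.Extended_Nat"
begin

definition affine_map :: "('a::real_vector \<Rightarrow> 'a) \<Rightarrow> bool" where
  "affine_map \<Phi> \<longleftrightarrow> (\<exists>L b. linear L \<and> (\<forall>x. \<Phi> x = L x + b))"

definition K_positive :: "'a::real_normed_vector set \<Rightarrow> ('a \<Rightarrow> 'a) \<Rightarrow> bool" where
  "K_positive K \<Phi> \<longleftrightarrow> \<Phi> ` K \<subseteq> K"

definition strictly_K_positive :: "'a::real_normed_vector set \<Rightarrow> ('a \<Rightarrow> 'a) \<Rightarrow> bool" where
  "strictly_K_positive K \<Phi> \<longleftrightarrow> \<Phi> ` K \<subseteq> interior K"

definition K_primitive :: "'a::real_normed_vector set \<Rightarrow> ('a \<Rightarrow> 'a) \<Rightarrow> bool" where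
  "K_primitive K \<Phi> \<longleftrightarrow> K_positive K \<Phi> \<and> (\<exists>k::nat. k \<ge> 1 \<and> strictly_K_positive K (\<Phi> ^^ k))"

definition gamma_aff_map :: "'a::real_normed_vector set \<Rightarrow> ('a \<Rightarrow> 'a) \<Rightarrow> nat" where
  "gamma_aff_map K \<Phi> = (LEAST k::nat. k \<ge> 1 \<and> strictly_K_positive K (\<Phi> ^^ k))"

definition gamma_aff :: "'a::real_normed_vector set \<Rightarrow> enat" where
  "gamma_aff K = (SUP \<Phi> \<in> {\<Phi>. affine_map \<Phi> \<and> K_primitive K \<Phi>}. enat (gamma_aff_map K \<Phi>))"

end

theory Submission
  imports Defs
begin


lemma struct_lemma:
  fixes A :: "'a::euclidean_space \<Rightarrow> 'a" and c :: 'a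
  assumes lin: "linear A" and pos: "\<And>z. norm z \<le> 1 \<Longrightarrow> norm (A z + c) \<le> 1"
    and TS: "\<And>x. norm x \<le> 1 \<Longrightarrow> norm (A x + c) = 1 \<Longrightarrow> norm x = 1"
    and zT: "z \<in> affine hull {x. norm x \<le> 1 \<and> norm (A x + c) = 1}" and z1: "norm z = 1"
  shows "norm (A z + c) = 1"
proof -
  define T where "T = {x. norm x \<le> 1 \<and> norm (A x + c) = 1}"
  define g where "g x = adjoint A (A x + c)" for x
  have gw: "(A x + c) \<bullet> A w = w \<bullet> g x" for x w
    using adjoint_works[OF lin, of w "A x + c"] by (simp add: g_def inner_commute)
  have exp: "norm (A z + c)^2 = norm (A x + c)^2 + 2 * ((z - x) \<bullet> g x) + norm (A (z - x))^2" for x z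
  proof -
    have "A z + c = (A x + c) + A (z - x)" using linear_diff[OF lin] by (simp add: algebra_simps)
    hence "norm (A z + c)^2 = norm (A x + c)^2 + 2 * ((A x + c) \<bullet> A (z - x)) + norm (A (z - x))^2"
      by (simp add: power2_norm_eq_inner inner_add_left inner_add_right inner_commute)
    thus ?thesis using gw by simp
  qed
  have grad: "g x = norm (g x) *\<^sub>R x" if xT: "x \<in> T" for x
  proof -
    have x1: "norm x = 1" using xT TS by (auto simp: T_def)
    have le: "(z - x) \<bullet> g x \<le> 0" if "norm z \<le> 1" for z
    proof -
      have "norm (A z + c)^2 \<le> 1" using pos[OF that] by (simp add: power_le_one)
      moreover have "norm (A x + c)^2 = 1" using xT by (simp add: T_def)
      moreover have "0 \<le> norm (A (z - x))^2" by simp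
      ultimately show ?thesis using exp[of z x] by linarith
    qed
    show ?thesis
    proof (cases "g x = 0")
      case True thus ?thesis by simp
    next
      case False
      hence ng: "norm (g x) > 0" by simp
      have "(inverse (norm (g x)) *\<^sub>R g x - x) \<bullet> g x \<le> 0" by (rule le) (use False in simp)
      hence "norm (g x) \<le> x \<bullet> g x" using ng
        by (simp add: inner_diff_left power2_norm_eq_inner[symmetric] power2_eq_square field_simps)
      moreover have "x \<bullet> g x \<le> norm (g x)" using norm_cauchy_schwarz[of x "g x"] x1 by simp
      ultimately have eq: "x \<bullet> g x = norm (g x)" by simp
      have "x \<bullet> x = 1" using x1 by (simp add: norm_eq_1[symmetric])
      moreover have "g x \<bullet> g x = norm (g x)^2" by (simp add: power2_norm_eq_inner)
      ultimately have "norm (g x - norm (g x) *\<^sub>R x)^2 = 0"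
        using eq by (simp add: power2_norm_eq_inner inner_diff_left inner_diff_right inner_commute
            power2_eq_square[symmetric])
      thus ?thesis by simp
    qed
  qed
  have common: "g y = norm (g x) *\<^sub>R y" if "x \<in> T" "y \<in> T" for x y
  proof -
    have x1: "norm x = 1" "norm (A x + c) = 1" and y1: "norm y = 1" "norm (A y + c) = 1"
      using that TS by (auto simp: T_def)
    have xx: "x \<bullet> x = 1" "y \<bullet> y = 1" using x1 y1 by (simp_all add: norm_eq_1[symmetric])
    have e1: "0 = 2 * ((y - x) \<bullet> (norm (g x) *\<^sub>R x)) + norm (A (y - x))^2"
      using exp[of y x] x1 y1 grad[OF that(1)] by simp
    have e2: "0 = 2 * ((x - y) \<bullet> (norm (g y) *\<^sub>R y)) + norm (A (x - y))^2"
      using exp[of x y] x1 y1 grad[OF that(2)] by simp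
    have "A (x - y) = - A (y - x)" using linear_diff[OF lin] by simp
    hence nn: "norm (A (x - y)) = norm (A (y - x))" by simp
    have "(norm (g x) - norm (g y)) * (x \<bullet> y - 1) = 0"
      using e1 e2 nn xx by (simp add: inner_diff_left inner_commute algebra_simps)
    then consider "norm (g x) = norm (g y)" | "x \<bullet> y = 1" by auto
    thus ?thesis
    proof cases
      case 1 thus ?thesis using grad[OF that(2)] by simp
    next
      case 2
      have "norm (x - y)^2 = 0" using 2 xx
        by (simp add: power2_norm_eq_inner inner_diff_left inner_diff_right inner_commute)
      hence "x = y" by simp
      thus ?thesis using grad[OF that(2)] by simp
    qed
  qed
  have "T \<noteq> {}" using zT unfolding T_def by (metis affine_hull_empty empty_iff)
  then obtain x0 where x0: "x0 \<in> T" by auto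
  define \<mu> where "\<mu> = norm (g x0)"
  define Z where "Z = {y. \<forall>w. (A y + c) \<bullet> A w = \<mu> * (y \<bullet> w)}"
  have TZ: "T \<subseteq> Z"
  proof
    fix y assume "y \<in> T"
    hence "g y = \<mu> *\<^sub>R y" using common[OF x0] by (simp add: \<mu>_def)
    thus "y \<in> Z" unfolding Z_def using gw by (simp add: inner_commute)
  qed
  have "affine Z" unfolding affine_def
  proof (intro ballI allI impI)
    fix x y :: 'a and u v :: real
    assume hx: "x \<in> Z" and hy: "y \<in> Z" and uv: "u + v = 1"
    show "u *\<^sub>R x + v *\<^sub>R y \<in> Z" unfolding Z_def mem_Collect_eq
    proof
      fix w
      have h: "(A x + c) \<bullet> A w = \<mu> * (x \<bullet> w)" "(A y + c) \<bullet> A w = \<mu> * (y \<bullet> w)"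
        using hx hy by (auto simp: Z_def)
      have "A (u *\<^sub>R x + v *\<^sub>R y) + c = u *\<^sub>R (A x + c) + v *\<^sub>R (A y + c)"
        using uv linear_add[OF lin] linear_scale[OF lin]
        by (simp add: algebra_simps scaleR_add_left[symmetric])
      hence "(A (u *\<^sub>R x + v *\<^sub>R y) + c) \<bullet> A w = u * ((A x + c) \<bullet> A w) + v * ((A y + c) \<bullet> A w)"
        by (simp only: inner_add_left inner_scaleR_left)
      also have "\<dots> = u * (\<mu> * (x \<bullet> w)) + v * (\<mu> * (y \<bullet> w))" using h by simp
      finally show "(A (u *\<^sub>R x + v *\<^sub>R y) + c) \<bullet> A w = \<mu> * ((u *\<^sub>R x + v *\<^sub>R y) \<bullet> w)"
        by (simp add: inner_add_left algebra_simps)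
    qed
  qed
  hence "affine hull T \<subseteq> Z" using TZ by (simp add: hull_minimal)
  hence zZ: "z \<in> Z" using zT by (auto simp: T_def)
  have x0Z: "x0 \<in> Z" using x0 TZ by auto
  have x01: "norm x0 = 1" "norm (A x0 + c) = 1" using x0 TS by (auto simp: T_def)
  have a1: "(A x0 + c) \<bullet> A (z - x0) = \<mu> * (x0 \<bullet> (z - x0))" using x0Z by (simp add: Z_def)
  have a2: "(A z + c) \<bullet> A (z - x0) = \<mu> * (z \<bullet> (z - x0))" using zZ by (simp add: Z_def)
  have "A (z - x0) = (A z + c) - (A x0 + c)" using linear_diff[OF lin] by simp
  hence a3: "norm (A (z - x0))^2 = \<mu> * (z \<bullet> (z - x0)) - \<mu> * (x0 \<bullet> (z - x0))"
    using a1 a2 by (metis inner_diff_left power2_norm_eq_inner)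
  have "(z - x0) \<bullet> g x0 = \<mu> * (x0 \<bullet> (z - x0))" using a1 gw by simp
  hence "norm (A z + c)^2 = 1 + \<mu> * (z \<bullet> z - x0 \<bullet> x0)"
    using exp[of z x0] a3 x01 by (simp add: inner_diff_left inner_diff_right inner_commute algebra_simps)
  also have "\<dots> = 1" using z1 x01(1) norm_eq_1[of z] norm_eq_1[of x0] by simp
  finally show ?thesis using norm_ge_zero[of "A z + c"] power2_eq_1_iff by smt
qed



lemma nonconst_lemma:
  fixes A :: "'a::euclidean_space \<Rightarrow> 'a" and c :: 'a
  assumes lin: "linear A" and pos: "\<And>z. norm z \<le> 1 \<Longrightarrow> norm (A z + c) \<le> 1"
    and y: "norm y < 1" "norm (A y + c) = 1"
  shows "A w = 0"
proof -
  define e where "e = 1 - norm y"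
  have e0: "e > 0" using y by (simp add: e_def)
  have key: "A v = 0" if "norm v \<le> e" for v
  proof -
    have "norm (y + v) \<le> 1" using norm_triangle_ineq[of y v] that by (simp add: e_def)
    moreover have "norm (y - v) \<le> 1" using norm_triangle_ineq4[of y v] that by (simp add: e_def)
    ultimately have a: "norm (A (y + v) + c)^2 \<le> 1" "norm (A (y - v) + c)^2 \<le> 1"
      using pos by (simp_all add: power_le_one)
    have "A (y + v) + c = (A y + c) + A v" "A (y - v) + c = (A y + c) - A v"
      using linear_add[OF lin] linear_diff[OF lin] by (simp_all add: algebra_simps)
    hence "norm (A (y + v) + c)^2 + norm (A (y - v) + c)^2 = 2 * norm (A y + c)^2 + 2 * norm (A v)^2"
      by (simp add: power2_norm_eq_inner inner_add_left inner_add_right inner_diff_left inner_diff_right inner_commute)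
    moreover have "norm (A y + c)^2 = 1" using y by simp
    ultimately have "norm (A v)^2 \<le> 0" using a by linarith
    thus ?thesis by simp
  qed
  show ?thesis
  proof (cases "w = 0")
    case True thus ?thesis using linear_0[OF lin] by simp
  next
    case False
    define v where "v = (e / norm w) *\<^sub>R w"
    have "norm v \<le> e" using e0 False by (simp add: v_def)
    hence "A v = 0" by (rule key)
    hence "(e / norm w) *\<^sub>R A w = 0" using linear_scale[OF lin] by (simp add: v_def)
    thus ?thesis using e0 False by simp
  qed
qed

lemma affine_map_funpow:
  assumes "affine_map \<Phi>"
  shows "\<exists>L b. linear L \<and> (\<forall>x. (\<Phi> ^^ k) x = L x + b)"
proof (induction k)
  case 0 show ?case by (rule exI[of _ id], rule exI[of _ 0]) (auto intro!: linearI)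
next
  case (Suc k)
  then obtain L b where Lb: "linear L" "\<forall>x. (\<Phi> ^^ k) x = L x + b" by auto
  obtain M d where Md: "linear M" "\<forall>x. \<Phi> x = M x + d" using assms by (auto simp: affine_map_def)
  show ?case
  proof (intro exI conjI allI)
    show "linear (M \<circ> L)" using Lb Md linear_compose by blast
    fix x show "(\<Phi> ^^ Suc k) x = (M \<circ> L) x + (M b + d)"
      using Lb Md linear_add[OF Md(1)] by simp
  qed
qed

lemma upper_bound:
  fixes \<Phi> :: "'a::euclidean_space \<Rightarrow> 'a"
  assumes aff: "affine_map \<Phi>" and prim: "K_primitive (cball 0 1) \<Phi>"
  shows "strictly_K_positive (cball 0 1) (\<Phi> ^^ (DIM('a) + 1))"
proof -
  obtain A c where Ac: "linear A" "\<And>x. \<Phi> x = A x + c" using aff by (auto simp: affine_map_def)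
  have pos: "norm z \<le> 1 \<Longrightarrow> norm (\<Phi> z) \<le> 1" for z
    using prim by (auto simp: K_primitive_def K_positive_def image_subset_iff mem_cball_0)
  have posk: "norm z \<le> 1 \<Longrightarrow> norm ((\<Phi> ^^ k) z) \<le> 1" for k z
    by (induction k) (auto intro: pos)
  obtain m where m: "m \<ge> 1" "\<And>z. norm z \<le> 1 \<Longrightarrow> norm ((\<Phi> ^^ m) z) < 1"
    using prim by (force simp: K_primitive_def strictly_K_positive_def)
  have N: "norm y = 1" if "norm y \<le> 1" "norm (\<Phi> y) = 1" for y
  proof (rule ccontr)
    assume "norm y \<noteq> 1"
    hence "norm y < 1" using that by simp
    hence A0: "A w = 0" for w using nonconst_lemma[OF Ac(1), of c y w] that pos Ac(2) by auto
    have "(\<Phi> ^^ Suc j) x = c" for j x by (induction j) (auto simp: Ac(2) A0)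
    hence "(\<Phi> ^^ m) 0 = c" using m(1) by (metis Suc_pred' less_le_trans zero_less_one)
    moreover have "norm c = 1" using that(2) Ac(2) A0 by simp
    ultimately show False using m(2)[of 0] by simp
  qed
  define T where "T k = {x. norm x \<le> (1::real) \<and> norm ((\<Phi> ^^ k) x) = 1}" for k
  have Tdec: "T (Suc k) \<subseteq> T k" for k
  proof
    fix x assume "x \<in> T (Suc k)"
    hence "norm x \<le> 1" "norm (\<Phi> ((\<Phi> ^^ k) x)) = 1" by (auto simp: T_def)
    thus "x \<in> T k" using N[of "(\<Phi> ^^ k) x"] posk by (auto simp: T_def)
  qed
  have Tmono: "T j \<subseteq> T i" if "i \<le> j" for i j
    using that
  proof (induction j rule: dec_induct)
    case base thus ?case by simp
  next
    case (step j) thus ?case using Tdec[of j] by blast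
  qed
  have TS: "norm x = 1" if "x \<in> T k" for x k
    using Tmono[of 0 k] that by (auto simp: T_def)
  have Tm: "T m = {}"
  proof -
    have "\<not> (norm x \<le> 1 \<and> norm ((\<Phi> ^^ m) x) = 1)" for x using m(2)[of x] by auto
    thus ?thesis by (auto simp: T_def)
  qed
  have stepb: "T (Suc (Suc i)) = T (Suc i)" if "T (Suc i) = T i" for i
  proof
    show "T (Suc (Suc i)) \<subseteq> T (Suc i)" by (rule Tdec)
    show "T (Suc i) \<subseteq> T (Suc (Suc i))"
    proof
      fix x assume x: "x \<in> T (Suc i)"
      hence x1: "norm x \<le> 1" "norm ((\<Phi> ^^ i) (\<Phi> x)) = 1" by (auto simp: T_def funpow_Suc_right simp del: funpow.simps)
      hence "\<Phi> x \<in> T i" using pos by (auto simp: T_def)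
      hence "\<Phi> x \<in> T (Suc i)" using that by simp
      thus "x \<in> T (Suc (Suc i))" using x1 by (auto simp: T_def funpow_Suc_right simp del: funpow.simps)
    qed
  qed
  have stable: "T (Suc k) = {}" if "T (Suc k) = T k" for k
  proof -
    have st: "T (Suc (k + j)) = T (k + j)" for j
    proof (induction j)
      case 0 show ?case using that by simp
    next
      case (Suc j) thus ?case using stepb[of "k + j"] by simp
    qed
    have "T (k + j) = T k" for j
    proof (induction j)
      case 0 show ?case by simp
    next
      case (Suc j) thus ?case using st[of j] by simp
    qed
    hence "T k = T (k + m)" by simp
    also have "\<dots> \<subseteq> T m" by (rule Tmono) simp
    finally show ?thesis using Tm that by simp
  qed
  have struct: "x \<in> T k" if "x \<in> affine hull (T k)" "norm x = 1" for x k
  proof -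
    obtain L b where Lb: "linear L" "\<And>x. (\<Phi> ^^ k) x = L x + b"
      using affine_map_funpow[OF aff, of k] by auto
    have setEq: "{x. norm x \<le> 1 \<and> norm (L x + b) = 1} = T k" by (simp add: T_def Lb(2))
    have "norm (L x + b) = 1"
    proof (rule struct_lemma[OF Lb(1)])
      show "norm (L z + b) \<le> 1" if "norm z \<le> 1" for z using posk[OF that, of k] Lb(2) by simp
      show "norm z = 1" if "norm z \<le> 1" "norm (L z + b) = 1" for z
        using TS[of z k] that by (simp add: T_def Lb(2))
      show "x \<in> affine hull {x. norm x \<le> 1 \<and> norm (L x + b) = 1}" using setEq that by simp
      show "norm x = 1" by fact
    qed
    thus ?thesis using that Lb(2) by (simp add: T_def)
  qed
  have dimk: "T k \<noteq> {} \<Longrightarrow> aff_dim (T k) \<le> int DIM('a) - int k" for k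
  proof (induction k)
    case 0 show ?case using aff_dim_le_DIM by simp
  next
    case (Suc k)
    have ne: "T k \<noteq> {}" using Suc.prems Tdec[of k] by blast
    have le: "aff_dim (T (Suc k)) \<le> aff_dim (T k)" using Tdec by (rule aff_dim_subset)
    have "aff_dim (T (Suc k)) \<noteq> aff_dim (T k)"
    proof
      assume eq: "aff_dim (T (Suc k)) = aff_dim (T k)"
      have "affine hull (T (Suc k)) = affine hull (T k)"
        by (rule affine_dim_equal) (use Suc.prems eq hull_mono[OF Tdec[of k]] in auto)
      have "T k \<subseteq> T (Suc k)"
      proof
        fix x assume "x \<in> T k"
        hence "x \<in> affine hull (T (Suc k))" "norm x = 1"
          using \<open>affine hull (T (Suc k)) = affine hull (T k)\<close> hull_inc TS by auto
        thus "x \<in> T (Suc k)" by (rule struct)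
      qed
      hence "T (Suc k) = T k" using Tdec by blast
      thus False using stable Suc.prems by blast
    qed
    thus ?case using Suc.IH[OF ne] le by simp
  qed
  have "T (DIM('a) + 1) = {}"
  proof (rule ccontr)
    assume "T (DIM('a) + 1) \<noteq> {}"
    hence "aff_dim (T (DIM('a) + 1)) \<le> -1" using dimk by fastforce
    hence "aff_dim (T (DIM('a) + 1)) = -1" using aff_dim_geq by (metis order_antisym)
    thus False using aff_dim_empty \<open>T (DIM('a) + 1) \<noteq> {}\<close> by blast
  qed
  show ?thesis unfolding strictly_K_positive_def interior_cball image_subset_iff
  proof
    fix x :: 'a assume "x \<in> cball 0 1"
    hence x: "norm x \<le> 1" by simp
    have "norm ((\<Phi> ^^ (DIM('a) + 1)) x) \<le> 1" using posk[OF x] .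
    moreover have "norm ((\<Phi> ^^ (DIM('a) + 1)) x) \<noteq> 1"
      using \<open>T (DIM('a) + 1) = {}\<close> x unfolding T_def by blast
    ultimately have "norm ((\<Phi> ^^ (DIM('a) + 1)) x) < 1" by linarith
    thus "(\<Phi> ^^ (DIM('a) + 1)) x \<in> ball 0 1" by (simp only: mem_ball_0)
  qed
qed



lemma lower_bound:
  "\<exists>\<Phi>::real^'n \<Rightarrow> real^'n. affine_map \<Phi> \<and> K_primitive (cball 0 1) \<Phi> \<and>
      gamma_aff_map (cball 0 1) \<Phi> = CARD('n) + 1"
proof -
  obtain m where nm: "CARD('n) = Suc m" using not0_implies_Suc[of "CARD('n)"] by auto
  obtain h where h: "bij_betw h {..<Suc m} (UNIV::'n set)"
    using ex_bij_betw_nat_finite[of "UNIV::'n set"] nm by (auto simp: atLeast0LessThan)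
  define ix where "ix = inv_into {..<Suc m} h"
  have ixh: "ix (h i) = i" if "i < Suc m" for i
    using h that by (auto simp: ix_def bij_betw_def inv_into_f_f)
  have hix: "h (ix j) = j" for j
    using h by (auto simp: ix_def bij_betw_def f_inv_into_f)
  have ixlt: "ix j < Suc m" for j
    using h by (metis bij_betw_def hix imageE ixh lessThan_iff UNIV_I)
  have sumh: "(\<Sum>j\<in>UNIV. f j) = (\<Sum>i<Suc m. f (h i))" for f :: "'n \<Rightarrow> real"
    using sum.reindex_bij_betw[OF h, of f] by simp
  have n2: "norm x ^ 2 = (\<Sum>i<Suc m. (x $ h i)^2)" for x :: "real^'n"
  proof -
    have "norm x ^ 2 = x \<bullet> x" by (rule power2_norm_eq_inner)
    also have "\<dots> = (\<Sum>j\<in>UNIV. (x $ j)^2)" by (simp add: inner_vec_def power2_eq_square)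
    also have "\<dots> = (\<Sum>i<Suc m. (x $ h i)^2)" by (rule sumh)
    finally show ?thesis .
  qed
  define Q :: real where "Q = (\<Sum>i<Suc m. 4 ^ (m - i))"
  have Q1: "Q \<ge> 1" unfolding Q_def by (simp add: sum_nonneg)
  define \<tau> where "\<tau> = 1 / sqrt Q"
  have tau0: "\<tau> > 0" using Q1 by (simp add: \<tau>_def)
  have tauQ: "\<tau>^2 * Q = 1" using Q1 by (simp add: \<tau>_def power_divide)
  define \<rho> where "\<rho> = sqrt (3 + \<tau>^2)"
  have rho0: "\<rho> > 0" by (simp add: \<rho>_def add_pos_nonneg)
  have rho2: "\<rho>^2 = 3 + \<tau>^2" by (simp add: \<rho>_def add_nonneg_nonneg)
  define L :: "real^'n \<Rightarrow> real^'n" where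
    "L x = (\<chi> j. if ix j = 0 then - (\<tau> * x $ h m) / (2 * \<rho>) else x $ h (ix j - 1) / 2)" for x
  define b :: "real^'n" where "b = (\<chi> j. if ix j = 0 then - 3 / (2 * \<rho>) else 0)"
  define \<Phi> where "\<Phi> x = L x + b" for x
  have linL: "linear L"
    by (rule linearI) (use rho0 in \<open>auto simp: L_def vec_eq_iff field_simps\<close>)
  have aff: "affine_map \<Phi>" unfolding affine_map_def \<Phi>_def using linL by blast
  have F0: "\<Phi> x $ h 0 = - (3 + \<tau> * x $ h m) / (2 * \<rho>)" for x
    using ixh[of 0] rho0 by (simp add: \<Phi>_def L_def b_def field_simps)
  have F1: "\<Phi> x $ h (Suc i) = x $ h i / 2" if "i < m" for x i
    using ixh[of "Suc i"] that by (simp add: \<Phi>_def L_def b_def)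
  have nPhi: "norm (\<Phi> x) ^ 2 = 1 - 3 * (x $ h m - \<tau>)^2 / (4 * \<rho>^2) - (1 - norm x ^ 2) / 4" for x
  proof -
    have "norm (\<Phi> x) ^ 2 = (\<Phi> x $ h 0)^2 + (\<Sum>i<m. (\<Phi> x $ h (Suc i))^2)"
      by (simp only: n2 sum.lessThan_Suc_shift)
    also have "\<dots> = (3 + \<tau> * x $ h m)^2 / (4 * \<rho>^2) + (\<Sum>i<m. (x $ h i)^2) / 4"
      using rho0 by (simp add: F0 F1 power_divide sum_divide_distrib power_mult_distrib power2_eq_square algebra_simps)
    also have "(\<Sum>i<m. (x $ h i)^2) = norm x ^ 2 - (x $ h m)^2" by (simp add: n2)
    finally have e: "norm (\<Phi> x) ^ 2 = (3 + \<tau> * x $ h m)^2 / (4 * \<rho>^2) + (norm x ^ 2 - (x $ h m)^2) / 4" .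
    have k: "(3 + \<tau> * x $ h m)^2 + 3 * (x $ h m - \<tau>)^2 = \<rho>^2 * (3 + (x $ h m)^2)"
      unfolding rho2 by (simp add: algebra_simps power2_eq_square)
    have "(3 + \<tau> * x $ h m)^2 / (4 * \<rho>^2) = (3 + (x $ h m)^2) / 4 - 3 * (x $ h m - \<tau>)^2 / (4 * \<rho>^2)"
      using k rho0 by (simp add: field_simps)
    thus ?thesis unfolding e by (simp add: field_simps)
  qed
  have P1: "norm (\<Phi> x) \<le> 1" if "norm x \<le> 1" for x
  proof -
    have "norm x ^ 2 \<le> 1" using that by (simp add: power_le_one)
    hence "0 \<le> (1 - norm x ^ 2) / 4" by simp
    moreover have "0 \<le> 3 * (x $ h m - \<tau>)^2 / (4 * \<rho>^2)" by simp
    ultimately have "norm (\<Phi> x) ^ 2 \<le> 1" using nPhi[of x] by linarith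
    thus ?thesis by (simp add: power_le_one_iff)
  qed
  have P2: "norm x = 1 \<and> x $ h m = \<tau>" if "norm x \<le> 1" "norm (\<Phi> x) = 1" for x
  proof -
    have a: "norm x ^ 2 \<le> 1" using that by (simp add: power_le_one)
    have b: "0 \<le> 3 * (x $ h m - \<tau>)^2 / (4 * \<rho>^2)" by simp
    have "3 * (x $ h m - \<tau>)^2 / (4 * \<rho>^2) + (1 - norm x ^ 2) / 4 = 0"
    proof -
      have "norm (\<Phi> x) ^ 2 = 1" using that(2) by simp
      thus ?thesis using nPhi[of x] by linarith
    qed
    moreover have "0 \<le> (1 - norm x ^ 2) / 4" using a by simp
    ultimately have c: "3 * (x $ h m - \<tau>)^2 / (4 * \<rho>^2) = 0" "(1 - norm x ^ 2) / 4 = 0" using b by linarith+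
    hence c2: "norm x ^ 2 = 1" by simp
    from c(1) rho0 have "x $ h m = \<tau>" by simp
    moreover from c2 have "norm x = 1" using power2_eq_1_iff norm_ge_zero by smt
    ultimately show ?thesis by simp
  qed
  have P3: "norm (\<Phi> x) = 1" if "norm x = 1" "x $ h m = \<tau>" for x
  proof -
    have "norm (\<Phi> x) ^ 2 = 1" using nPhi[of x] that by simp
    thus ?thesis using power2_eq_1_iff norm_ge_zero by smt
  qed
  have Pk: "norm ((\<Phi> ^^ k) x) \<le> 1" if "norm x \<le> 1" for k x
    by (induction k) (use that P1 in auto)
  define x0 :: "real^'n" where "x0 = (\<chi> j. \<tau> * 2 ^ (m - ix j))"
  have x0h: "x0 $ h i = \<tau> * 2 ^ (m - i)" if "i < Suc m" for i
    using ixh[OF that] by (simp add: x0_def)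
  have nx0: "norm x0 = 1"
  proof -
    have p4: "(2::real) ^ (k * 2) = 4 ^ k" for k
      by (metis mult.commute power_mult num_double numeral_times_numeral power2_eq_square)
    have "norm x0 ^ 2 = (\<Sum>i<Suc m. \<tau>^2 * 4 ^ (m - i))"
      unfolding n2 by (rule sum.cong) (simp_all add: x0h power_mult_distrib power_mult[symmetric] p4)
    also have "\<dots> = \<tau>^2 * Q" unfolding Q_def by (rule sum_distrib_left[symmetric])
    finally have "norm x0 ^ 2 = 1" using tauQ by simp
    thus ?thesis using power2_eq_1_iff norm_ge_zero by smt
  qed
  have chain: "norm ((\<Phi> ^^ j) x0) = 1 \<and> (\<forall>i. j \<le> i \<and> i < Suc m \<longrightarrow> (\<Phi> ^^ j) x0 $ h i = \<tau> * 2 ^ (m - i))"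
    if "j \<le> Suc m" for j
    using that
  proof (induction j)
    case 0 thus ?case using nx0 x0h by simp
  next
    case (Suc j)
    define y where "y = (\<Phi> ^^ j) x0"
    have IH: "norm y = 1" "\<And>i. j \<le> i \<Longrightarrow> i < Suc m \<Longrightarrow> y $ h i = \<tau> * 2 ^ (m - i)"
      using Suc by (auto simp: y_def)
    have ym: "y $ h m = \<tau>" using IH(2)[of m] Suc.prems by simp
    have "norm (\<Phi> y) = 1" using P3 IH(1) ym by blast
    moreover have "\<Phi> y $ h i = \<tau> * 2 ^ (m - i)" if ii: "Suc j \<le> i" "i < Suc m" for i
    proof -
      obtain i' where i': "i = Suc i'" using ii by (cases i) auto
      have "\<Phi> y $ h i = y $ h i' / 2" using F1[of i' y] i' that by simp
      also have "\<dots> = \<tau> * 2 ^ (m - i') / 2" using IH(2)[of i'] i' that by simp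
      also have "m - i' = Suc (m - i)" using i' that by simp
      finally show ?thesis by simp
    qed
    ultimately show ?case by (simp add: y_def)
  qed
  have Lk: "norm z = 1 \<and> (k \<ge> 1 \<longrightarrow> z $ h m = \<tau>)" if "norm z \<le> 1" "norm ((\<Phi> ^^ k) z) = 1" for k z
    using that
  proof (induction k)
    case 0 thus ?case by simp
  next
    case (Suc k)
    have "norm ((\<Phi> ^^ k) z) \<le> 1" using Pk Suc.prems(1) by blast
    hence q: "norm ((\<Phi> ^^ k) z) = 1 \<and> (\<Phi> ^^ k) z $ h m = \<tau>" using P2 Suc.prems(2) by simp
    show ?case
    proof (cases k)
      case 0 thus ?thesis using q by simp
    next
      case (Suc k') thus ?thesis using Suc.IH q Suc.prems(1) by simp
    qed
  qed
  have lastj: "(\<Phi> ^^ j) z $ h m = \<tau>" if "norm z \<le> 1" "norm ((\<Phi> ^^ k) z) = 1" "j < k" for j k z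
  proof -
    have "(\<Phi> ^^ k) z = (\<Phi> ^^ (k - j)) ((\<Phi> ^^ j) z)"
      using that(3) by (metis funpow_add le_add_diff_inverse2 less_imp_le o_apply)
    thus ?thesis using Lk[of "(\<Phi> ^^ j) z" "k - j"] Pk[OF that(1)] that by simp
  qed
  have shift: "(\<Phi> ^^ Suc j) z $ h j = (1/2)^j * (\<Phi> z $ h 0)" if "j < Suc m" for j z
    using that
  proof (induction j)
    case 0 thus ?case by simp
  next
    case (Suc j)
    have "(\<Phi> ^^ Suc (Suc j)) z $ h (Suc j) = \<Phi> ((\<Phi> ^^ Suc j) z) $ h (Suc j)" by simp
    also have "\<dots> = (\<Phi> ^^ Suc j) z $ h j / 2" using F1 Suc.prems by simp
    finally show ?case using Suc by simp
  qed
  have strict: "norm ((\<Phi> ^^ (CARD('n) + 1)) z) < 1" if "norm z \<le> 1" for z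
  proof (rule ccontr)
    assume "\<not> ?thesis"
    hence eq: "norm ((\<Phi> ^^ (Suc (Suc m))) z) = 1" using Pk[OF that, of "CARD('n) + 1"] nm by simp
    have zm: "z $ h m = \<tau>" using lastj[OF that eq, of 0] by simp
    have "(\<Phi> ^^ Suc m) z $ h m = \<tau>" using lastj[OF that eq, of "Suc m"] by simp
    moreover have "(\<Phi> ^^ Suc m) z $ h m = (1/2)^m * (- (3 + \<tau> * \<tau>) / (2 * \<rho>))"
      using shift[of m z] F0[of z] zm by simp
    moreover have "(1/2)^m * (- (3 + \<tau> * \<tau>) / (2 * \<rho>)) < 0"
    proof -
      have "0 \<le> \<tau> * \<tau>" by simp
      hence "- (3 + \<tau> * \<tau>) < 0" by linarith
      hence "- (3 + \<tau> * \<tau>) / (2 * \<rho>) < 0" using rho0 by (simp add: divide_neg_pos)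
      moreover have "(0::real) < (1/2)^m" by simp
      ultimately show ?thesis by (metis mult_pos_neg)
    qed
    ultimately show False using tau0 by simp
  qed
  have SP: "strictly_K_positive (cball 0 1) (\<Phi> ^^ (CARD('n) + 1))"
    unfolding strictly_K_positive_def interior_cball image_subset_iff
  proof
    fix x :: "real^'n" assume "x \<in> cball 0 1"
    hence "norm x \<le> 1" by simp
    hence "norm ((\<Phi> ^^ (CARD('n) + 1)) x) < 1" by (rule strict)
    thus "(\<Phi> ^^ (CARD('n) + 1)) x \<in> ball 0 1" by (simp only: mem_ball_0)
  qed
  have notSP: "\<not> strictly_K_positive (cball 0 1) (\<Phi> ^^ k)" if "k \<le> CARD('n)" for k
  proof
    assume "strictly_K_positive (cball 0 1) (\<Phi> ^^ k)"
    hence "(\<Phi> ^^ k) x0 \<in> ball 0 1" using nx0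
      unfolding strictly_K_positive_def interior_cball image_subset_iff by simp
    moreover have "norm ((\<Phi> ^^ k) x0) = 1" using chain[of k] that nm by simp
    ultimately show False by simp
  qed
  have pos: "K_positive (cball 0 1) \<Phi>"
    unfolding K_positive_def image_subset_iff using P1 by simp
  have prim: "K_primitive (cball 0 1) \<Phi>"
    unfolding K_primitive_def using pos SP by auto
  have "gamma_aff_map (cball 0 1) \<Phi> = CARD('n) + 1"
    unfolding gamma_aff_map_def
  proof (rule Least_equality)
    show "1 \<le> CARD('n) + 1 \<and> strictly_K_positive (cball 0 1) (\<Phi> ^^ (CARD('n) + 1))" using SP by simp
    fix k assume "1 \<le> k \<and> strictly_K_positive (cball 0 1) (\<Phi> ^^ k)"
    hence "\<not> k \<le> CARD('n)" using notSP by blast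
    thus "CARD('n) + 1 \<le> k" by simp
  qed
  thus ?thesis using aff prim by blast
qed


theorem theorem3:
  shows "gamma_aff (cball (0::real^'n) 1) = enat (CARD('n) + 1)"
proof (rule antisym)
  show "gamma_aff (cball (0::real^'n) 1) \<le> enat (CARD('n) + 1)"
    unfolding gamma_aff_def
  proof (rule SUP_least)
    fix \<Phi> :: "real^'n \<Rightarrow> real^'n"
    assume "\<Phi> \<in> {\<Phi>. affine_map \<Phi> \<and> K_primitive (cball 0 1) \<Phi>}"
    hence "strictly_K_positive (cball 0 1) (\<Phi> ^^ (DIM(real^'n) + 1))"
      using upper_bound by blast
    hence "gamma_aff_map (cball 0 1) \<Phi> \<le> CARD('n) + 1"
      unfolding gamma_aff_map_def by (intro Least_le) simp
    thus "enat (gamma_aff_map (cball 0 1) \<Phi>) \<le> enat (CARD('n) + 1)" by simp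
  qed
  obtain \<Phi> :: "real^'n \<Rightarrow> real^'n" where P: "affine_map \<Phi>" "K_primitive (cball 0 1) \<Phi>"
    "gamma_aff_map (cball 0 1) \<Phi> = CARD('n) + 1" using lower_bound by blast
  show "enat (CARD('n) + 1) \<le> gamma_aff (cball (0::real^'n) 1)"
    unfolding gamma_aff_def using P by (metis (mono_tags, lifting) SUP_upper mem_Collect_eq)
qed

end
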